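(* Every continuous valuation $\nu$ on a topological space $X$ that takes only finitely many distinct values is point-continuous.
   Context: A valuation on $X$ is a map $\nu:\mathcal OX\to[0,\infty]$ with $\nu(\emptyset)=0$, monotone and modular; continuous if it preserves directed suprema of opens. A valuation $\nu$ is point-continuous if for every open $U$ and every real $r$ with $0\le r<\nu(U)$ there is a finite subset $A\subseteq U$ such that $\nu(V)>r$ for every open $V\supseteq A$. *)

theory Defs
  imports "HOL-Analysis.Analysis" "HOL-Library.Extended_Nonnegative_Real"
begin

text \<open>Valuations on the open sets of a topological space X (abstract topology).
  The values of nu on non-open sets are irrelevant.\<close>

definition valuation :: "'a topology \<Rightarrow> ('a set \<Rightarrow> ennreal) \<Rightarrow> bool" where
  "valuation X \<nu> \<longleftrightarrow>
     \<nu> {} = 0 \<and>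
     (\<forall>U V. openin X U \<and> openin X V \<and> U \<subseteq> V \<longrightarrow> \<nu> U \<le> \<nu> V) \<and>
     (\<forall>U V. openin X U \<and> openin X V \<longrightarrow> \<nu> U + \<nu> V = \<nu> (U \<union> V) + \<nu> (U \<inter> V))"

definition directed_set_family :: "'a set set \<Rightarrow> bool" where
  "directed_set_family \<U> \<longleftrightarrow> \<U> \<noteq> {} \<and>
     (\<forall>U\<in>\<U>. \<forall>V\<in>\<U>. \<exists>W\<in>\<U>. U \<subseteq> W \<and> V \<subseteq> W)"

definition continuous_valuation :: "'a topology \<Rightarrow> ('a set \<Rightarrow> ennreal) \<Rightarrow> bool" where
  "continuous_valuation X \<nu> \<longleftrightarrow> valuation X \<nu> \<and>
     (\<forall>\<U>. \<U> \<subseteq> {U. openin X U} \<and> directed_set_family \<U> \<longrightarrow>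
        \<nu> (\<Union>\<U>) = (SUP U\<in>\<U>. \<nu> U))"

definition point_continuous :: "'a topology \<Rightarrow> ('a set \<Rightarrow> ennreal) \<Rightarrow> bool" where
  "point_continuous X \<nu> \<longleftrightarrow>
     (\<forall>U (r::real). openin X U \<and> 0 \<le> r \<and> ennreal r < \<nu> U \<longrightarrow>
        (\<exists>A. finite A \<and> A \<subseteq> U \<and>
             (\<forall>V. openin X V \<and> A \<subseteq> V \<longrightarrow> ennreal r < \<nu> V)))"

end

theory Submission
  imports Defs
begin

theorem proposition4p4:
  fixes X :: "'a topology" and \<nu> :: "'a set \<Rightarrow> ennreal"
  assumes "continuous_valuation X \<nu>"
    and "finite (\<nu> ` {U. openin X U})"
  shows "point_continuous X \<nu>"
  unfolding point_continuous_def
proof (intro allI impI)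
  fix U and r :: real
  assume H: "openin X U \<and> 0 \<le> r \<and> ennreal r < \<nu> U"
  hence oU: "openin X U" and rU: "ennreal r < \<nu> U" by auto
  have val: "valuation X \<nu>" using assms(1) unfolding continuous_valuation_def by auto
  have mono: "\<And>V W. openin X V \<Longrightarrow> openin X W \<Longrightarrow> V \<subseteq> W \<Longrightarrow> \<nu> V \<le> \<nu> W"
    using val unfolding valuation_def by auto
  have modu: "\<And>V W. openin X V \<Longrightarrow> openin X W \<Longrightarrow> \<nu> V + \<nu> W = \<nu> (V \<union> W) + \<nu> (V \<inter> W)"
    using val unfolding valuation_def by auto
  have cont: "\<And>\<U>. \<U> \<subseteq> {U. openin X U} \<Longrightarrow> directed_set_family \<U> \<Longrightarrow> \<nu> (\<Union>\<U>) = (SUP U\<in>\<U>. \<nu> U)"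
    using assms(1) unfolding continuous_valuation_def by auto
  show "\<exists>A. finite A \<and> A \<subseteq> U \<and> (\<forall>V. openin X V \<and> A \<subseteq> V \<longrightarrow> ennreal r < \<nu> V)"
  proof (rule ccontr)
    assume "\<not> ?thesis"
    hence neg: "\<And>A. finite A \<Longrightarrow> A \<subseteq> U \<Longrightarrow> \<exists>V. openin X V \<and> A \<subseteq> V \<and> \<nu> V \<le> ennreal r"
      by (auto simp: not_less)
    define S where "S A = \<nu> ` {V. openin X V \<and> A \<subseteq> V \<and> V \<subseteq> U}" for A
    define g where "g A = Min (S A)" for A
    have Sfin: "finite (S A)" for A
      unfolding S_def by (rule finite_subset[OF _ assms(2)]) auto
    have Sne: "S A \<noteq> {}" if "A \<subseteq> U" for A
      unfolding S_def using oU that by auto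
    have g_le: "g A \<le> \<nu> V" if "A \<subseteq> U" "openin X V" "A \<subseteq> V" "V \<subseteq> U" for A V
      unfolding g_def using Sfin that by (intro Min_le) (auto simp: S_def)
    have g_ex: "\<exists>V. openin X V \<and> A \<subseteq> V \<and> V \<subseteq> U \<and> \<nu> V = g A" if "A \<subseteq> U" for A
    proof -
      have "g A \<in> S A" unfolding g_def using Min_in[OF Sfin Sne[OF that]] .
      thus ?thesis unfolding S_def by auto
    qed
    have g_r: "g A \<le> ennreal r" if fA: "finite A" "A \<subseteq> U" for A
    proof -
      obtain V where V: "openin X V" "A \<subseteq> V" "\<nu> V \<le> ennreal r" using neg[OF fA] by auto
      have "g A \<le> \<nu> (V \<inter> U)" using g_le[of A "V \<inter> U"] V oU fA by auto
      also have "\<dots> \<le> \<nu> V" using mono V oU by auto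
      finally show ?thesis using V by auto
    qed
    have g_mono: "g A \<le> g B" if AB: "A \<subseteq> B" "B \<subseteq> U" for A B
    proof -
      obtain V where "openin X V" "B \<subseteq> V" "V \<subseteq> U" "\<nu> V = g B" using g_ex[OF AB(2)] by auto
      thus ?thesis using g_le[of A V] AB by auto
    qed
    define T where "T = g ` {A. finite A \<and> A \<subseteq> U}"
    have Tfin: "finite T"
    proof (rule finite_subset[OF _ assms(2)])
      show "T \<subseteq> \<nu> ` {U. openin X U}"
      proof
        fix t assume "t \<in> T"
        then obtain A where "A \<subseteq> U" "t = g A" unfolding T_def by auto
        thus "t \<in> \<nu> ` {U. openin X U}" using g_ex[of A] by force
      qed
    qed
    have Tne: "T \<noteq> {}" unfolding T_def by auto
    define c where "c = Max T"
    obtain A0 where A0: "finite A0" "A0 \<subseteq> U" "g A0 = c"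
      using Max_in[OF Tfin Tne] unfolding c_def T_def by auto
    have gc: "g A = c" if "finite A" "A0 \<subseteq> A" "A \<subseteq> U" for A
    proof -
      have "g A \<le> c" unfolding c_def T_def using Tfin that by (intro Max_ge) (auto simp: T_def)
      moreover have "c \<le> g A" using g_mono[of A0 A] that A0 by auto
      ultimately show ?thesis by auto
    qed
    have cr: "c \<le> ennreal r" using g_r A0 by auto
    hence cfin: "c \<noteq> \<infinity>" by (auto simp: top_unique)
    define D where "D = {V. openin X V \<and> A0 \<subseteq> V \<and> V \<subseteq> U \<and> \<nu> V = c}"
    have Dsub: "D \<subseteq> {U. openin X U}" unfolding D_def by auto
    have Dne: "D \<noteq> {}" using g_ex[OF A0(2)] A0 unfolding D_def by auto
    have Ddir: "directed_set_family D"
      unfolding directed_set_family_def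
    proof (intro conjI Dne ballI)
      fix V W assume V: "V \<in> D" and W: "W \<in> D"
      have oVW: "openin X (V \<inter> W)" "openin X (V \<union> W)" using V W unfolding D_def by auto
      have "c \<le> \<nu> (V \<inter> W)" using g_le[of A0 "V \<inter> W"] A0 V W oVW unfolding D_def by auto
      moreover have "\<nu> (V \<inter> W) \<le> c" using mono[of "V \<inter> W" V] V oVW unfolding D_def by auto
      ultimately have i: "\<nu> (V \<inter> W) = c" by auto
      have "c + c = \<nu> (V \<union> W) + c" using modu[of V W] V W i unfolding D_def by auto
      hence "c + c = c + \<nu> (V \<union> W)" by (simp add: add.commute)
      hence "\<nu> (V \<union> W) = c" using cfin ennreal_add_left_cancel by metis
      hence "V \<union> W \<in> D" using V W oVW unfolding D_def by auto
      thus "\<exists>Z\<in>D. V \<subseteq> Z \<and> W \<subseteq> Z" by auto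
    qed
    have DU: "\<Union>D = U"
    proof
      show "\<Union>D \<subseteq> U" unfolding D_def by auto
      show "U \<subseteq> \<Union>D"
      proof
        fix x assume x: "x \<in> U"
        have "g (insert x A0) = c" using gc[of "insert x A0"] A0 x by auto
        then obtain V where "openin X V" "insert x A0 \<subseteq> V" "V \<subseteq> U" "\<nu> V = c"
          using g_ex[of "insert x A0"] A0 x by auto
        thus "x \<in> \<Union>D" unfolding D_def by auto
      qed
    qed
    have "\<nu> U = (SUP V\<in>D. \<nu> V)" using cont[OF Dsub Ddir] DU by simp
    also have "\<dots> = (SUP V\<in>D. c)" unfolding D_def by (rule SUP_cong) auto
    also have "\<dots> = c" using Dne by simp
    finally show False using cr rU by auto
  qed
qed

end
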